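(* Assume Assumptions A, B, C, D hold, let $w^{(t)}$ be generated by Algorithm 2 with $\eta^{(t)}=D\sqrt{\varepsilon}$ ($D>0$), and suppose $\alpha_i^{(t)}\le\alpha/L_\phi$ for some $\alpha\in(0,\tfrac14)$. Then for all $i\in[n]$ and $0\le t<T$, $$\|h(w^{(t+1)};i)-h_i^*\|^2\le(1+\varepsilon)\|h(w^{(t)};i)-h_i^*\|^2-2(1-4\alpha)\alpha_i^{(t)}\big[\phi_i(h(w^{(t)};i))-\phi_i(h_i^* )\big]+\varepsilon(4\varepsilon+3)\Big[D^2H^2+c\big(2+(V+\varepsilon^2+2)GD^2\big)^2\Big]+\frac{4\varepsilon+3}{\varepsilon}\big\|\eta^{(t)}H_i^{(t)}v_{*\mathrm{reg}}^{(t)}-\alpha_i^{(t)}\nabla\phi_i(h(w^{(t)};i))\big\|^2.$$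
   Context: Let $n,c,d$ be positive integers and $[n]=\{1,\dots,n\}$. For each $i\in[n]$ let $h(\cdot;i):\mathbb{R}^d\to\mathbb{R}^c$ (components $h_j(\cdot;i)$) and $\phi_i:\mathbb{R}^c\to\mathbb{R}$. Each $\phi_i$ attains its minimum at $h_i^*$. Norms: Euclidean for vectors, operator for matrices. Assumption A: each $\phi_i$ is convex, bounded below, and $L_\phi$-smooth. Assumption B: each $h(\cdot;i)$ is twice continuously differentiable and there is $G>0$ with $\|\nabla_w^2 h_j(w;i)\|\le G$ for all $w,i,j$. Iteration setup: given $\varepsilon>0$, $\eta^{(t)}>0$, $\alpha_i^{(t)}>0$ and iterates $w^{(t)}$, let $H_i^{(t)}$ be the Jacobian of $h(\cdot;i)$ at $w^{(t)}$, $\Phi^{(t)}(v)=\frac{1}{2n}\sum_{i=1}^n\|\eta^{(t)}H_i^{(t)}v-\alpha_i^{(t)}\nabla\phi_i(h(w^{(t)};i))\|^2$, $\Psi^{(t)}(v)=\Phi^{(t)}(v)+\frac{\varepsilon^2}{2}\|v\|^2$, $v_{*\mathrm{reg}}^{(t)}$ its unique minimizer. Algorithm 2: $w^{(0)}$ arbitrary, $w^{(t+1)}=w^{(t)}-\eta^{(t)}v^{(t)}$ where $\|v^{(t)}-v_{*\mathrm{reg}}^{(t)}\|\le\varepsilon$, $t=0,\dots,T-1$. Assumption C (constant $V>0$): for each $0\le t<T$ there is $\hat v^{(t)}$ with $\|\hat v^{(t)}\|^2\le V$ and $\Phi^{(t)}(\hat v^{(t)})\le\varepsilon^2$. Assumption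 D (constant $H>0$): $\|H_i^{(t)}\|\le H/\sqrt\varepsilon$ for all $i\in[n]$, $0\le t<T$. *)

theory Defs
  imports "HOL-Analysis.Analysis"
begin

text \<open>The least-squares objective Phi^(t)(v) = 1/(2n) sum_{i=1..n} || eta H_i v - alpha_i g_i ||^2,
  where Jt i is the Jacobian H_i^(t) (a c x d matrix), al i = alpha_i^(t) and
  gr i = gradient of phi_i at h(w^(t); i).\<close>
definition Phi_obj ::
  "nat \<Rightarrow> real \<Rightarrow> (nat \<Rightarrow> real^'d^'c) \<Rightarrow> (nat \<Rightarrow> real) \<Rightarrow> (nat \<Rightarrow> real^'c) \<Rightarrow> real^'d \<Rightarrow> real"
  where "Phi_obj n eta Jt al gr v =
     (1 / (2 * real n)) * (\<Sum>i=1..n. (norm (eta *\<^sub>R (Jt i *v v) - al i *\<^sub>R gr i))\<^sup>2)"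

definition Psi_obj ::
  "nat \<Rightarrow> real \<Rightarrow> real \<Rightarrow> (nat \<Rightarrow> real^'d^'c) \<Rightarrow> (nat \<Rightarrow> real) \<Rightarrow> (nat \<Rightarrow> real^'c) \<Rightarrow> real^'d \<Rightarrow> real"
  where "Psi_obj n eps eta Jt al gr v = Phi_obj n eta Jt al gr v + eps\<^sup>2 / 2 * (norm v)\<^sup>2"

end

theory Submission
  imports Defs
begin


lemma taylor1:
  fixes q q' :: "real \<Rightarrow> real"
  assumes d: "\<And>s. 0 \<le> s \<Longrightarrow> s \<le> 1 \<Longrightarrow> DERIV q s :> q' s"
    and b: "\<And>s. 0 \<le> s \<Longrightarrow> s \<le> 1 \<Longrightarrow> \<bar>q' s - q' 0\<bar> \<le> M * s"
  shows "\<bar>q 1 - q 0 - q' 0\<bar> \<le> M / 2"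
proof -
  let ?k1 = "\<lambda>s. q s - s * q' 0 - M * s\<^sup>2 / 2"
  let ?k2 = "\<lambda>s. - (q s - s * q' 0 + M * s\<^sup>2 / 2)"
  have "?k1 1 \<le> ?k1 0"
  proof (rule DERIV_nonpos_imp_nonincreasing[of 0 1])
    fix s :: real assume s: "0 \<le> s" "s \<le> 1"
    have "DERIV ?k1 s :> q' s - q' 0 - M * s"
      by (auto intro!: derivative_eq_intros d s simp: power2_eq_square algebra_simps)
    moreover have "q' s - q' 0 - M * s \<le> 0" using b[OF s] by linarith
    ultimately show "\<exists>y. DERIV ?k1 s :> y \<and> y \<le> 0" by blast
  qed simp
  moreover have "?k2 1 \<le> ?k2 0"
  proof (rule DERIV_nonpos_imp_nonincreasing[of 0 1])
    fix s :: real assume s: "0 \<le> s" "s \<le> 1"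
    have "DERIV ?k2 s :> - (q' s - q' 0 + M * s)"
      by (auto intro!: derivative_eq_intros d s simp: power2_eq_square algebra_simps)
    moreover have "- (q' s - q' 0 + M * s) \<le> 0" using b[OF s] by linarith
    ultimately show "\<exists>y. DERIV ?k2 s :> y \<and> y \<le> 0" by blast
  qed simp
  ultimately have A: "q 1 - q 0 - q' 0 \<le> M/2" and B: "-(q 1 - q 0 - q' 0) \<le> M/2" by simp_all
  show ?thesis using A B by (metis abs_le_iff)
qed

lemma path_deriv:
  fixes f :: "'a::real_normed_vector \<Rightarrow> real"
  assumes "\<And>x. (f has_derivative (F x)) (at x)" "\<And>x. linear (F x)"
  shows "((\<lambda>s. f (z + s *\<^sub>R d)) has_real_derivative F (z + s *\<^sub>R d) d) (at s)"
proof -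
  have p: "((\<lambda>s. z + s *\<^sub>R d) has_derivative (\<lambda>t. t *\<^sub>R d)) (at s)"
    by (auto intro!: derivative_eq_intros)
  have "((\<lambda>s. f (z + s *\<^sub>R d)) has_derivative (\<lambda>t. F (z + s *\<^sub>R d) (t *\<^sub>R d))) (at s)"
    using has_derivative_compose[OF p assms(1)] by (simp add: o_def)
  moreover have "(\<lambda>t. F (z + s *\<^sub>R d) (t *\<^sub>R d)) = (*) (F (z + s *\<^sub>R d) d)"
    by (rule ext) (simp add: linear_scale[OF assms(2)])
  ultimately show ?thesis by (metis has_field_derivative_def)
qed

lemma mv_row: "((A::real^'d^'c) *v u) $ j = (A $ j) \<bullet> u"
  by (simp add: matrix_vector_mult_def inner_vec_def mult.commute)

lemma norm_sq_cart: "(norm (x::real^'c))\<^sup>2 = (\<Sum>j\<in>UNIV. (x $ j)\<^sup>2)"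
  unfolding power2_norm_eq_inner inner_vec_def by (simp add: power2_eq_square)

lemma phi_above:
  fixes f :: "'a::real_inner \<Rightarrow> real"
  assumes cv: "convex_on UNIV f" and dv: "\<And>x. (f has_derivative (\<lambda>u. gp x \<bullet> u)) (at x)"
  shows "f y - f z \<ge> gp z \<bullet> (y - z)"
proof -
  let ?d = "y - z"
  let ?q = "\<lambda>s. f (z + s *\<^sub>R ?d)"
  have cq: "convex_on UNIV ?q"
  proof (rule convex_onI)
    fix t a b :: real assume t: "0 < t" "t < 1"
    have e: "z + ((1 - t) *\<^sub>R a + t *\<^sub>R b) *\<^sub>R ?d = (1 - t) *\<^sub>R (z + a *\<^sub>R ?d) + t *\<^sub>R (z + b *\<^sub>R ?d)"
      by (simp add: algebra_simps)
    show "?q ((1 - t) *\<^sub>R a + t *\<^sub>R b) \<le> (1 - t) * ?q a + t * ?q b"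
      unfolding e using convex_onD[OF cv, of t] t by simp
  qed simp
  have lin: "\<And>x. linear (\<lambda>u. gp x \<bullet> u)"
    by (simp add: bounded_linear.linear bounded_linear_inner_right)
  have "(?q has_real_derivative gp (z + 0 *\<^sub>R ?d) \<bullet> ?d) (at 0)"
    by (rule path_deriv[where F="\<lambda>x u. gp x \<bullet> u", OF dv lin])
  hence "(?q has_real_derivative gp z \<bullet> ?d) (at 0 within UNIV)" by simp
  from convex_on_imp_above_tangent[OF cq _ _ _ this, of 1] show ?thesis by simp
qed

lemma descent:
  fixes f :: "'a::real_inner \<Rightarrow> real"
  assumes dv: "\<And>x. (f has_derivative (\<lambda>u. gp x \<bullet> u)) (at x)"
    and lip: "\<And>x y. norm (gp x - gp y) \<le> L * norm (x - y)"
  shows "f (z + d) \<le> f z + gp z \<bullet> d + L / 2 * (norm d)\<^sup>2"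
proof -
  let ?q = "\<lambda>s. f (z + s *\<^sub>R d)"
  let ?q' = "\<lambda>s. gp (z + s *\<^sub>R d) \<bullet> d"
  have lin: "\<And>x. linear (\<lambda>u. gp x \<bullet> u)"
    by (simp add: bounded_linear.linear bounded_linear_inner_right)
  have "\<bar>?q 1 - ?q 0 - ?q' 0\<bar> \<le> (L * (norm d)\<^sup>2) / 2"
  proof (rule taylor1)
    fix s :: real assume s: "0 \<le> s" "s \<le> 1"
    show "(?q has_real_derivative ?q' s) (at s)"
      by (rule path_deriv[where F="\<lambda>x u. gp x \<bullet> u", OF dv lin])
    have "\<bar>?q' s - ?q' 0\<bar> = \<bar>(gp (z + s *\<^sub>R d) - gp z) \<bullet> d\<bar>" by (simp add: inner_diff_left)
    also have "\<dots> \<le> norm (gp (z + s *\<^sub>R d) - gp z) * norm d" by (rule Cauchy_Schwarz_ineq2)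
    also have "\<dots> \<le> (L * norm (s *\<^sub>R d)) * norm d"
      using lip[of "z + s *\<^sub>R d" z] by (intro mult_right_mono) auto
    also have "\<dots> = L * (norm d)\<^sup>2 * s" using s by (simp add: power2_eq_square)
    finally show "\<bar>?q' s - ?q' 0\<bar> \<le> L * (norm d)\<^sup>2 * s" .
  qed
  from abs_le_D1[OF this] show ?thesis by simp
qed

lemma h_rem:
  fixes hh :: "real^'d \<Rightarrow> real^'c" and JJ :: "real^'d \<Rightarrow> real^'d^'c"
    and HH :: "'c \<Rightarrow> real^'d \<Rightarrow> real^'d^'d"
  assumes dh: "\<And>x. (hh has_derivative (\<lambda>u. JJ x *v u)) (at x)"
    and dJ: "\<And>j x. ((\<lambda>y. JJ y $ j) has_derivative (\<lambda>u. HH j x *v u)) (at x)"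
    and bH: "\<And>j x. onorm (\<lambda>u. HH j x *v u) \<le> G"
  shows "\<bar>(hh (z + u) - hh z - JJ z *v u) $ j\<bar> \<le> G / 2 * (norm u)\<^sup>2"
proof -
  have row: "norm (JJ y $ j - JJ x $ j) \<le> G * norm (y - x)" for x y
    by (rule differentiable_bound[of UNIV _ "\<lambda>x u. HH j x *v u"]) (auto simp: dJ bH)
  have dhj: "((\<lambda>y. hh y $ j) has_derivative (\<lambda>v. (JJ x $ j) \<bullet> v)) (at x)" for x
  proof -
    have "((\<lambda>y. hh y $ j) has_derivative (\<lambda>v. (JJ x *v v) $ j)) (at x)"
      using bounded_linear.has_derivative[OF bounded_linear_vec_nth dh[of x]] .
    thus ?thesis by (simp add: mv_row)
  qed
  have lin: "\<And>x. linear (\<lambda>u. JJ x $ j \<bullet> u)"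
    by (simp add: bounded_linear.linear bounded_linear_inner_right)
  let ?q = "\<lambda>s. hh (z + s *\<^sub>R u) $ j"
  let ?q' = "\<lambda>s. JJ (z + s *\<^sub>R u) $ j \<bullet> u"
  have "\<bar>?q 1 - ?q 0 - ?q' 0\<bar> \<le> (G * (norm u)\<^sup>2) / 2"
  proof (rule taylor1)
    fix s :: real assume s: "0 \<le> s" "s \<le> 1"
    show "(?q has_real_derivative ?q' s) (at s)"
      by (rule path_deriv[where F="\<lambda>x v. JJ x $ j \<bullet> v", OF dhj lin])
    have "\<bar>?q' s - ?q' 0\<bar> = \<bar>(JJ (z + s *\<^sub>R u) $ j - JJ z $ j) \<bullet> u\<bar>" by (simp add: inner_diff_left)
    also have "\<dots> \<le> norm (JJ (z + s *\<^sub>R u) $ j - JJ z $ j) * norm u" by (rule Cauchy_Schwarz_ineq2)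
    also have "\<dots> \<le> (G * norm (s *\<^sub>R u)) * norm u"
      using row[of "z + s *\<^sub>R u" z] by (intro mult_right_mono) auto
    also have "\<dots> = G * (norm u)\<^sup>2 * s" using s by (simp add: power2_eq_square)
    finally show "\<bar>?q' s - ?q' 0\<bar> \<le> G * (norm u)\<^sup>2 * s" .
  qed
  thus ?thesis by (simp add: mv_row)
qed

lemma sq_split:
  fixes A S e :: real
  assumes "e > 0"
  shows "(A + S)\<^sup>2 \<le> (1 + e) * A\<^sup>2 + (1 + 1 / e) * S\<^sup>2"
proof -
  have "0 \<le> (e * A - S)\<^sup>2" by simp
  hence "e * (2 * A * S) \<le> e * (e * A\<^sup>2 + S\<^sup>2 / e)" using assms
    by (simp add: power2_eq_square algebra_simps)
  hence "2 * A * S \<le> e * A\<^sup>2 + S\<^sup>2 / e" using assms by simp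
  thus ?thesis by (simp add: power2_eq_square algebra_simps add_divide_distrib)
qed


theorem mainTheorem16:
  fixes n :: nat
    and h :: "nat \<Rightarrow> real^'d \<Rightarrow> real^'c"
    and J :: "nat \<Rightarrow> real^'d \<Rightarrow> real^'d^'c"
    and Hs :: "nat \<Rightarrow> 'c \<Rightarrow> real^'d \<Rightarrow> real^'d^'d"
    and phi :: "nat \<Rightarrow> real^'c \<Rightarrow> real"
    and gphi :: "nat \<Rightarrow> real^'c \<Rightarrow> real^'c"
    and hstar :: "nat \<Rightarrow> real^'c"
    and L G V H D eps alpha :: real
    and T :: nat
    and eta :: "nat \<Rightarrow> real"
    and al :: "nat \<Rightarrow> nat \<Rightarrow> real"
    and w v vreg :: "nat \<Rightarrow> real^'d"
  assumes n_pos: "n \<ge> 1"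
    \<comment> \<open>phi_i attains its minimum at h_i^*\<close>
    and hstar_min: "\<And>i x. i \<in> {1..n} \<Longrightarrow> phi i (hstar i) \<le> phi i x"
    \<comment> \<open>Assumption A: convex, bounded below, L-smooth (gradient gphi, L-Lipschitz)\<close>
    and L_pos: "L > 0"
    and phi_convex: "\<And>i. i \<in> {1..n} \<Longrightarrow> convex_on UNIV (phi i)"
    and phi_bdd: "\<And>i. i \<in> {1..n} \<Longrightarrow> bdd_below (range (phi i))"
    and phi_grad: "\<And>i x. i \<in> {1..n} \<Longrightarrow>
        (phi i has_derivative (\<lambda>u. gphi i x \<bullet> u)) (at x)"
    and phi_smooth: "\<And>i x y. i \<in> {1..n} \<Longrightarrow> norm (gphi i x - gphi i y) \<le> L * norm (x - y)"
    \<comment> \<open>Assumption B: h(.;i) is C^2 with Jacobian J i, Hessians Hs i j of components bounded by G\<close>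
    and G_pos: "G > 0"
    and h_jac: "\<And>i x. i \<in> {1..n} \<Longrightarrow> (h i has_derivative (\<lambda>u. J i x *v u)) (at x)"
    and h_hess: "\<And>i j x. i \<in> {1..n} \<Longrightarrow>
        ((\<lambda>y. J i y $ j) has_derivative (\<lambda>u. Hs i j x *v u)) (at x)"
    and hess_cont: "\<And>i j. i \<in> {1..n} \<Longrightarrow> continuous_on UNIV (Hs i j)"
    and hess_bound: "\<And>i j x. i \<in> {1..n} \<Longrightarrow> onorm (\<lambda>u. Hs i j x *v u) \<le> G"
    \<comment> \<open>iteration setup\<close>
    and eps_pos: "eps > 0"
    and D_pos: "D > 0"
    and eta_def: "\<And>t. eta t = D * sqrt eps"
    and al_pos: "\<And>i t. i \<in> {1..n} \<Longrightarrow> al i t > 0"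
    and alpha_range: "0 < alpha" "alpha < 1/4"
    and al_bound: "\<And>i t. i \<in> {1..n} \<Longrightarrow> al i t \<le> alpha / L"
    \<comment> \<open>vreg t is the (unique) minimizer of Psi^(t)\<close>
    and vreg_min: "\<And>t u. t < T \<Longrightarrow>
        Psi_obj n eps (eta t) (\<lambda>i. J i (w t)) (\<lambda>i. al i t) (\<lambda>i. gphi i (h i (w t))) (vreg t)
        \<le> Psi_obj n eps (eta t) (\<lambda>i. J i (w t)) (\<lambda>i. al i t) (\<lambda>i. gphi i (h i (w t))) u"
    \<comment> \<open>Algorithm 2\<close>
    and v_approx: "\<And>t. t < T \<Longrightarrow> norm (v t - vreg t) \<le> eps"
    and w_step: "\<And>t. t < T \<Longrightarrow> w (Suc t) = w t - eta t *\<^sub>R v t"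
    \<comment> \<open>Assumption C\<close>
    and V_pos: "V > 0"
    and assmC: "\<And>t. t < T \<Longrightarrow> \<exists>vh. (norm vh)\<^sup>2 \<le> V \<and>
        Phi_obj n (eta t) (\<lambda>i. J i (w t)) (\<lambda>i. al i t) (\<lambda>i. gphi i (h i (w t))) vh \<le> eps\<^sup>2"
    \<comment> \<open>Assumption D\<close>
    and H_pos: "H > 0"
    and assmD: "\<And>i t. i \<in> {1..n} \<Longrightarrow> t < T \<Longrightarrow> onorm (\<lambda>u. J i (w t) *v u) \<le> H / sqrt eps"
  shows "\<forall>i \<in> {1..n}. \<forall>t < T.
    (norm (h i (w (Suc t)) - hstar i))\<^sup>2
    \<le> (1 + eps) * (norm (h i (w t) - hstar i))\<^sup>2
      - 2 * (1 - 4 * alpha) * al i t * (phi i (h i (w t)) - phi i (hstar i))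
      + eps * (4 * eps + 3) * (D\<^sup>2 * H\<^sup>2
          + real CARD('c) * (2 + (V + eps\<^sup>2 + 2) * G * D\<^sup>2)\<^sup>2)
      + (4 * eps + 3) / eps
          * (norm (eta t *\<^sub>R (J i (w t) *v vreg t) - al i t *\<^sub>R gphi i (h i (w t))))\<^sup>2"
  proof (intro ballI allI impI)
  fix i t assume i: "i \<in> {1..n}" and t: "t < T"
  define z where "z = h i (w t)"
  define g where "g = gphi i z"
  define Dl where "Dl = phi i z - phi i (hstar i)"
  define x where "x = z - hstar i"
  define et where "et = eta t"
  define Jm where "Jm = J i (w t)"
  define vr where "vr = vreg t"
  define vv where "vv = v t"
  define ai where "ai = al i t"
  define K where "K = 2 + (V + eps\<^sup>2 + 2) * G * D\<^sup>2"
  define P where "P = D\<^sup>2 * H\<^sup>2 + real CARD('c) * K\<^sup>2"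
  define a where "a = x - ai *\<^sub>R g"
  define b where "b = ai *\<^sub>R g - et *\<^sub>R (Jm *v vr)"
  define e1 where "e1 = et *\<^sub>R (Jm *v (vr - vv))"
  define u where "u = (- et) *\<^sub>R vv"
  define r where "r = h i (w t + u) - h i (w t) - Jm *v u"
  have ws: "w (Suc t) = w t + u" using w_step[OF t] by (simp add: u_def vv_def et_def)
  have Ju: "Jm *v u = - (et *\<^sub>R (Jm *v vv))"
    unfolding u_def using matrix_vector_mult_scaleR[of Jm "-et" vv] by simp
  have decomp: "h i (w (Suc t)) - hstar i = a + b + e1 + r"
    unfolding ws a_def b_def e1_def r_def x_def z_def Ju
    by (simp add: algebra_simps)
  have et_eq: "et = D * sqrt eps" by (simp add: et_def eta_def)
  have et_pos: "et > 0" using D_pos eps_pos by (simp add: et_eq)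
  have ai_pos: "ai > 0" using al_pos[OF i] by (simp add: ai_def)
  have aiL: "ai * L \<le> alpha" using al_bound[OF i, of t] L_pos by (simp add: ai_def field_simps)
  have Dl0: "Dl \<ge> 0" using hstar_min[OF i] by (simp add: Dl_def)
  have F1: "g \<bullet> x \<ge> Dl"
    using phi_above[OF phi_convex[OF i] phi_grad[OF i], where y="hstar i" and z=z]
    by (simp add: g_def x_def Dl_def inner_diff_right)
  have F2: "(norm g)\<^sup>2 \<le> 2 * L * Dl"
  proof -
    have "phi i (z + (- (1/L)) *\<^sub>R g) \<le> phi i z + g \<bullet> ((- (1/L)) *\<^sub>R g) + L / 2 * (norm ((- (1/L)) *\<^sub>R g))\<^sup>2"
      unfolding g_def by (rule descent[OF phi_grad[OF i] phi_smooth[OF i]])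
    also have "\<dots> = phi i z - (norm g)\<^sup>2 / (2 * L)"
      using L_pos by (simp add: power2_norm_eq_inner[symmetric] power_mult_distrib field_simps power2_eq_square)
    finally have "phi i (hstar i) \<le> phi i z - (norm g)\<^sup>2 / (2 * L)"
      using hstar_min[OF i, of "z + (- (1/L)) *\<^sub>R g"] by linarith
    thus ?thesis using L_pos by (simp add: Dl_def field_simps)
  qed
  have anorm: "(norm a)\<^sup>2 = (norm x)\<^sup>2 - 2 * ai * (g \<bullet> x) + ai\<^sup>2 * (norm g)\<^sup>2"
    unfolding a_def power2_norm_eq_inner
    by (simp add: inner_diff_left inner_diff_right inner_commute power2_eq_square algebra_simps)
  have A2: "(norm a)\<^sup>2 \<le> (norm x)\<^sup>2 - 2 * ai * (1 - alpha) * Dl"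
  proof -
    have "ai\<^sup>2 * (norm g)\<^sup>2 \<le> ai\<^sup>2 * (2 * L * Dl)" using F2 by (intro mult_left_mono) auto
    also have "\<dots> = 2 * ai * Dl * (ai * L)" by (simp add: power2_eq_square)
    also have "\<dots> \<le> 2 * ai * Dl * alpha" using aiL ai_pos Dl0 by (intro mult_left_mono) auto
    finally have "ai\<^sup>2 * (norm g)\<^sup>2 \<le> 2 * ai * Dl * alpha" .
    moreover have "ai * Dl \<le> ai * (g \<bullet> x)" using F1 ai_pos by simp
    ultimately show ?thesis unfolding anorm by (simp add: algebra_simps)
  qed
  have F4: "norm e1 \<le> eps * D * H"
  proof -
    have "norm e1 = et * norm (Jm *v (vr - vv))" using et_pos by (simp add: e1_def)
    also have "\<dots> \<le> et * (onorm (\<lambda>u. Jm *v u) * norm (vr - vv))"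
      using onorm[OF matrix_vector_mul_bounded_linear[of Jm]] et_pos
      by (intro mult_left_mono) auto
    also have "\<dots> \<le> et * ((H / sqrt eps) * eps)"
      using assmD[OF i t] v_approx[OF t] H_pos eps_pos et_pos
      by (intro mult_left_mono mult_mono) (auto simp: Jm_def vr_def vv_def norm_minus_commute)
    also have "\<dots> = eps * D * H" using eps_pos by (simp add: et_eq)
    finally show ?thesis .
  qed
  have F5: "(norm vr)\<^sup>2 \<le> V + 2"
  proof -
    obtain vh where vh: "(norm vh)\<^sup>2 \<le> V"
      "Phi_obj n (eta t) (\<lambda>i. J i (w t)) (\<lambda>i. al i t) (\<lambda>i. gphi i (h i (w t))) vh \<le> eps\<^sup>2"
      using assmC[OF t] by blast
    have ph0: "Phi_obj n (eta t) (\<lambda>i. J i (w t)) (\<lambda>i. al i t) (\<lambda>i. gphi i (h i (w t))) vr \<ge> 0"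
      unfolding Phi_obj_def by (intro mult_nonneg_nonneg sum_nonneg) auto
    have "eps\<^sup>2 / 2 * (norm vr)\<^sup>2 \<le> eps\<^sup>2 + eps\<^sup>2 / 2 * V"
      using vreg_min[OF t, of vh] vh ph0 eps_pos
      unfolding Psi_obj_def vr_def
      by (smt (verit, best) mult_left_mono zero_le_divide_iff zero_le_power2)
    hence "eps\<^sup>2 * (norm vr)\<^sup>2 \<le> eps\<^sup>2 * (V + 2)" by (simp add: algebra_simps)
    thus ?thesis using eps_pos by simp
  qed
  have F6: "(norm vv)\<^sup>2 \<le> 2 * (V + 2 + eps\<^sup>2)"
  proof -
    have "norm vv \<le> norm vr + eps"
      using norm_triangle_ineq[of vr "vv - vr"] v_approx[OF t]
      by (simp add: vv_def vr_def norm_minus_commute)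
    hence "(norm vv)\<^sup>2 \<le> (norm vr + eps)\<^sup>2" by (intro power_mono) auto
    also have "\<dots> \<le> 2 * (norm vr)\<^sup>2 + 2 * eps\<^sup>2"
      using sq_split[of 1 "norm vr" eps] by simp
    finally show ?thesis using F5 by simp
  qed
  have F7: "(norm r)\<^sup>2 \<le> eps\<^sup>2 * real CARD('c) * K\<^sup>2"
  proof -
    have comp: "\<bar>r $ j\<bar> \<le> G / 2 * (norm u)\<^sup>2" for j
      unfolding r_def Jm_def
      by (rule h_rem[OF h_jac[OF i] h_hess[OF i] hess_bound[OF i]])
    have nu: "(norm u)\<^sup>2 = D\<^sup>2 * eps * (norm vv)\<^sup>2"
      using eps_pos by (simp add: u_def et_eq power_mult_distrib)
    have "G / 2 * (norm u)\<^sup>2 \<le> eps * K"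
    proof -
      have "G / 2 * (norm u)\<^sup>2 = eps * (G * D\<^sup>2 * ((norm vv)\<^sup>2 / 2))" by (simp add: nu)
      also have "\<dots> \<le> eps * (G * D\<^sup>2 * (V + 2 + eps\<^sup>2))"
        using F6 eps_pos G_pos by (intro mult_left_mono) auto
      also have "\<dots> \<le> eps * K" unfolding K_def using eps_pos by (simp add: algebra_simps)
      finally show ?thesis .
    qed
    hence cj: "(r $ j)\<^sup>2 \<le> (eps * K)\<^sup>2" for j
      using comp[of j] by (metis abs_ge_zero order_trans power2_abs power_mono)
    have "(norm r)\<^sup>2 = (\<Sum>j\<in>UNIV. (r $ j)\<^sup>2)" by (rule norm_sq_cart)
    also have "\<dots> \<le> (\<Sum>j\<in>(UNIV::'c set). (eps * K)\<^sup>2)" by (intro sum_mono cj)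
    also have "\<dots> = eps\<^sup>2 * real CARD('c) * K\<^sup>2" by (simp add: power_mult_distrib)
    finally show ?thesis .
  qed
  define NB where "NB = norm b"
  have NB: "NB = norm (eta t *\<^sub>R (J i (w t) *v vreg t) - al i t *\<^sub>R gphi i (h i (w t)))"
    unfolding NB_def b_def by (simp add: norm_minus_commute ai_def g_def z_def et_def Jm_def vr_def)
  define E where "E = norm e1 + norm r"
  have E2: "E\<^sup>2 \<le> 2 * eps\<^sup>2 * P"
  proof -
    have "E\<^sup>2 \<le> 2 * (norm e1)\<^sup>2 + 2 * (norm r)\<^sup>2"
      using sq_split[of 1 "norm e1" "norm r"] by (simp add: E_def)
    moreover have "(norm e1)\<^sup>2 \<le> (eps * D * H)\<^sup>2" using F4 by (intro power_mono) auto
    ultimately show ?thesis using F7 unfolding P_def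
      by (simp add: power_mult_distrib algebra_simps)
  qed
  have N: "norm (h i (w (Suc t)) - hstar i) \<le> norm a + (NB + E)"
    unfolding decomp NB_def E_def
    by (metis add.assoc norm_triangle_le norm_triangle_ineq add_mono order_refl)
  have "(norm (h i (w (Suc t)) - hstar i))\<^sup>2 \<le> (norm a + (NB + E))\<^sup>2"
    using N by (intro power_mono) auto
  also have "\<dots> \<le> (1 + eps) * (norm a)\<^sup>2 + (1 + 1/eps) * (NB + E)\<^sup>2"
    by (rule sq_split[OF eps_pos])
  also have "(NB + E)\<^sup>2 \<le> 3 * NB\<^sup>2 + 3 / 2 * E\<^sup>2"
    using sq_split[of 2 NB E] by simp
  hence "(1 + 1/eps) * (NB + E)\<^sup>2 \<le> (1 + 1/eps) * (3 * NB\<^sup>2 + 3 * eps\<^sup>2 * P)"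
    using E2 eps_pos by (intro mult_left_mono) auto
  also have "(1 + 1/eps) * (3 * NB\<^sup>2 + 3 * eps\<^sup>2 * P) \<le> (4 * eps + 3) / eps * NB\<^sup>2 + eps * (4 * eps + 3) * P"
  proof -
    have P0: "P \<ge> 0" unfolding P_def by simp
    have "(1 + 1/eps) * (3 * NB\<^sup>2) \<le> (4 * eps + 3) / eps * NB\<^sup>2"
      using eps_pos by (simp add: field_simps)
    moreover have "(1 + 1/eps) * (3 * eps\<^sup>2 * P) \<le> eps * (4 * eps + 3) * P"
      using eps_pos P0 by (simp add: field_simps power2_eq_square mult_right_mono)
    ultimately show ?thesis by (simp add: distrib_left)
  qed
  finally have M: "(norm (h i (w (Suc t)) - hstar i))\<^sup>2 \<le> (1 + eps) * (norm a)\<^sup>2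
     + ((4 * eps + 3) / eps * NB\<^sup>2 + eps * (4 * eps + 3) * P)" by simp
  have "(1 + eps) * (norm a)\<^sup>2 \<le> (1 + eps) * ((norm x)\<^sup>2 - 2 * ai * (1 - alpha) * Dl)"
    using A2 eps_pos by (intro mult_left_mono) auto
  also have "\<dots> \<le> (1 + eps) * (norm x)\<^sup>2 - 2 * (1 - 4 * alpha) * ai * Dl"
  proof -
    have ae: "alpha * eps \<le> eps" using mult_right_mono[of alpha 1 eps] alpha_range eps_pos by simp
    have "(1 - 4 * alpha) * (ai * Dl) \<le> (1 + eps) * (1 - alpha) * (ai * Dl)"
    proof (rule mult_right_mono)
      show "1 - 4 * alpha \<le> (1 + eps) * (1 - alpha)" using ae alpha_range by (simp add: algebra_simps)
      show "0 \<le> ai * Dl" using ai_pos Dl0 by simp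
    qed
    thus ?thesis by (simp add: algebra_simps)
  qed
  finally show "(norm (h i (w (Suc t)) - hstar i))\<^sup>2
    \<le> (1 + eps) * (norm (h i (w t) - hstar i))\<^sup>2
      - 2 * (1 - 4 * alpha) * al i t * (phi i (h i (w t)) - phi i (hstar i))
      + eps * (4 * eps + 3) * (D\<^sup>2 * H\<^sup>2
          + real CARD('c) * (2 + (V + eps\<^sup>2 + 2) * G * D\<^sup>2)\<^sup>2)
      + (4 * eps + 3) / eps
          * (norm (eta t *\<^sub>R (J i (w t) *v vreg t) - al i t *\<^sub>R gphi i (h i (w t))))\<^sup>2"
    using M unfolding NB[symmetric] P_def[symmetric] K_def[symmetric]
    by (simp add: x_def z_def ai_def Dl_def)
qed

end
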